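(* For every mixed graph $G$ without directed cycles: $\Lambda(G)+1\le \mathrm{nd}_{\mathrm m}(G^+)$, $\Lambda(G)\le\mathrm{tw}(G^+)$, $\Lambda(G)\le 2^{\mathrm{td}(G)}-2$, and $\Lambda(G)\le 2\,\mathrm{vc}(G)$.
   Context: A mixed graph $G$ consists of a finite vertex set $V(G)$, a set $E(G)$ of undirected edges and a set $A(G)$ of directed arcs; it is simple and contains no directed cycle. The maxrank $\Lambda(G)$ is the number of arcs on a longest directed path. The transitive closure $G^+$ is obtained by adding every arc $(u,v)$ such that $G$ has a directed path from $u$ to $v$ and removing edges parallel to such arcs. $N^+(v)$, $N^-(v)$, $N^{\mathrm u}(v)$ are the out-, in- and undirected neighbors of $v$; $u,v$ have the same mixed type if $N^{\mathrm u}(u)\setminus\{v\}=N^{\mathrm u}(v)\setminus\{u\}$, $N^-(u)=N^-(v)$, $N^+(u)=N^+(v)$; the mixed neighborhood diversity $\mathrm{nd}_{\mathrm m}$ is the number of mixed types. $\mathrm{tw},\mathrm{td},\mathrm{vc}$ are treewidth, treedepth, vertex cover number of the underlying undirected graph (arcs replaced by edges); $\mathrm{tw}(G^+)$ refers to the underlying graph of $G^+$. *)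

theory Defs
  imports Main
begin

definition mixed_graph :: "'a set \<Rightarrow> 'a set set \<Rightarrow> ('a \<times> 'a) set \<Rightarrow> bool" where
  "mixed_graph V E A \<longleftrightarrow> finite V
     \<and> (\<forall>e\<in>E. \<exists>u v. e = {u, v} \<and> u \<noteq> v \<and> u \<in> V \<and> v \<in> V)
     \<and> (\<forall>(u, v)\<in>A. u \<noteq> v \<and> u \<in> V \<and> v \<in> V)
     \<comment> \<open>simple: no edge parallel to an arc, no pair of opposite arcs\<close>
     \<and> (\<forall>(u, v)\<in>A. {u, v} \<notin> E \<and> (v, u) \<notin> A)"

definition no_directed_cycle :: "('a \<times> 'a) set \<Rightarrow> bool" where
  "no_directed_cycle A \<longleftrightarrow> acyclic A"

definition dpath :: "'a set \<Rightarrow> ('a \<times> 'a) set \<Rightarrow> 'a list \<Rightarrow> bool" where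
  "dpath V A xs \<longleftrightarrow> xs \<noteq> [] \<and> distinct xs \<and> set xs \<subseteq> V
     \<and> (\<forall>i. Suc i < length xs \<longrightarrow> (xs ! i, xs ! Suc i) \<in> A)"

definition maxrank :: "'a set \<Rightarrow> ('a \<times> 'a) set \<Rightarrow> nat" where
  "maxrank V A = Max {length xs - 1 | xs. dpath V A xs}"

definition tc_arcs :: "('a \<times> 'a) set \<Rightarrow> ('a \<times> 'a) set" where
  "tc_arcs A = A\<^sup>+"

definition tc_edges :: "'a set set \<Rightarrow> ('a \<times> 'a) set \<Rightarrow> 'a set set" where
  "tc_edges E A = {e \<in> E. \<not> (\<exists>u v. e = {u, v} \<and> (u, v) \<in> A\<^sup>+)}"

definition out_nbrs :: "('a \<times> 'a) set \<Rightarrow> 'a \<Rightarrow> 'a set" where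
  "out_nbrs A v = {w. (v, w) \<in> A}"

definition in_nbrs :: "('a \<times> 'a) set \<Rightarrow> 'a \<Rightarrow> 'a set" where
  "in_nbrs A v = {w. (w, v) \<in> A}"

definition u_nbrs :: "'a set set \<Rightarrow> 'a \<Rightarrow> 'a set" where
  "u_nbrs E v = {w. {v, w} \<in> E}"

definition same_mixed_type :: "'a set set \<Rightarrow> ('a \<times> 'a) set \<Rightarrow> 'a \<Rightarrow> 'a \<Rightarrow> bool" where
  "same_mixed_type E A u v \<longleftrightarrow>
     u_nbrs E u - {v} = u_nbrs E v - {u}
     \<and> in_nbrs A u = in_nbrs A v \<and> out_nbrs A u = out_nbrs A v"

definition nd_m :: "'a set \<Rightarrow> 'a set set \<Rightarrow> ('a \<times> 'a) set \<Rightarrow> nat" where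
  "nd_m V E A = card {{v \<in> V. same_mixed_type E A u v} | u. u \<in> V}"

definition uedges :: "'a set set \<Rightarrow> ('a \<times> 'a) set \<Rightarrow> 'a set set" where
  "uedges E A = E \<union> {{u, v} | u v. (u, v) \<in> A}"

definition connected_in :: "'b set set \<Rightarrow> 'b set \<Rightarrow> bool" where
  "connected_in F S \<longleftrightarrow>
     (\<forall>x\<in>S. \<forall>y\<in>S. (x, y) \<in> {(a, b). {a, b} \<in> F \<and> a \<in> S \<and> b \<in> S}\<^sup>*)"

definition is_tree :: "'b set \<Rightarrow> 'b set set \<Rightarrow> bool" where
  "is_tree I F \<longleftrightarrow> finite I \<and> I \<noteq> {}
     \<and> (\<forall>e\<in>F. \<exists>u v. e = {u, v} \<and> u \<noteq> v \<and> u \<in> I \<and> v \<in> I)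
     \<and> connected_in F I \<and> card F = card I - 1"

definition tree_decomp ::
  "'a set \<Rightarrow> 'a set set \<Rightarrow> nat set \<Rightarrow> nat set set \<Rightarrow> (nat \<Rightarrow> 'a set) \<Rightarrow> bool" where
  "tree_decomp V F I T B \<longleftrightarrow> is_tree I T
     \<and> (\<forall>i\<in>I. B i \<subseteq> V)
     \<and> (\<forall>v\<in>V. \<exists>i\<in>I. v \<in> B i)
     \<and> (\<forall>e\<in>F. \<exists>i\<in>I. e \<subseteq> B i)
     \<and> (\<forall>v\<in>V. connected_in T {i \<in> I. v \<in> B i})"

definition treewidth :: "'a set \<Rightarrow> 'a set set \<Rightarrow> nat" where
  "treewidth V F = (LEAST k. \<exists>I T B. tree_decomp V F I T B \<and> (\<forall>i\<in>I. card (B i) \<le> k + 1))"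

text \<open>Treedepth: minimum height of a rooted forest on V (given by a parent function)
 whose closure contains all edges.  Height counts vertices on a root-to-leaf path.\<close>
definition forest_anc :: "'a set \<Rightarrow> ('a \<Rightarrow> 'a option) \<Rightarrow> ('a \<times> 'a) set" where
  "forest_anc V par = {(v, u). v \<in> V \<and> par v = Some u}\<^sup>+"

definition elim_forest :: "'a set \<Rightarrow> 'a set set \<Rightarrow> ('a \<Rightarrow> 'a option) \<Rightarrow> bool" where
  "elim_forest V F par \<longleftrightarrow>
     (\<forall>v\<in>V. \<forall>u. par v = Some u \<longrightarrow> u \<in> V)
     \<and> acyclic {(v, u). v \<in> V \<and> par v = Some u}
     \<and> (\<forall>e\<in>F. \<exists>u v. e = {u, v} \<and> (u, v) \<in> forest_anc V par)"

definition forest_depth :: "'a set \<Rightarrow> ('a \<Rightarrow> 'a option) \<Rightarrow> 'a \<Rightarrow> nat" where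
  "forest_depth V par v = card {u. (v, u) \<in> forest_anc V par} + 1"

definition treedepth :: "'a set \<Rightarrow> 'a set set \<Rightarrow> nat" where
  "treedepth V F = (LEAST h. \<exists>par. elim_forest V F par \<and> (\<forall>v\<in>V. forest_depth V par v \<le> h))"

definition vertex_cover_number :: "'a set \<Rightarrow> 'a set set \<Rightarrow> nat" where
  "vertex_cover_number V F = (LEAST k. \<exists>C. C \<subseteq> V \<and> card C = k \<and> (\<forall>e\<in>F. e \<inter> C \<noteq> {}))"

end

theory Submission
  imports Defs
begin
lemma dpath_len: assumes "finite V" "dpath V A xs" shows "length xs \<le> card V"
proof -
  have "length xs = card (set xs)" using assms(2) by (simp add: dpath_def distinct_card)
  also have "\<dots> \<le> card V" using assms by (intro card_mono) (auto simp: dpath_def)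
  finally show ?thesis .
qed

lemma longest:
  assumes "finite V" "V \<noteq> {}"
  obtains xs where "dpath V A xs" "maxrank V A = length xs - 1"
proof -
  let ?S = "{length xs - 1 | xs. dpath V A xs}"
  have fin: "finite ?S"
    by (rule finite_subset[of _ "{..card V}"]) (auto dest: dpath_len[OF assms(1)])
  obtain v where "v \<in> V" using assms by auto
  then have "dpath V A [v]" by (simp add: dpath_def)
  then have ne: "?S \<noteq> {}" by blast
  have "Max ?S \<in> ?S" using Max_in[OF fin ne] .
  then show ?thesis using that unfolding maxrank_def by blast
qed

lemma vc_bound:
  assumes "dpath V A xs" "C \<subseteq> V" "finite V" "\<forall>e\<in>uedges E A. e \<inter> C \<noteq> {}"
  shows "length xs - 1 \<le> 2 * card C"
proof -
  define k where "k = length xs - 1"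
  have dist: "distinct xs" using assms(1) by (simp add: dpath_def)
  let ?P = "{i. i < k \<and> xs ! i \<in> C}"
  let ?Q = "{i. i < k \<and> xs ! Suc i \<in> C}"
  have "{..<k} \<subseteq> ?P \<union> ?Q"
  proof
    fix i assume "i \<in> {..<k}"
    then have "Suc i < length xs" by (auto simp: k_def)
    then have "(xs ! i, xs ! Suc i) \<in> A" using assms(1) by (simp add: dpath_def)
    then have "{xs ! i, xs ! Suc i} \<in> uedges E A" by (auto simp: uedges_def)
    then have "{xs ! i, xs ! Suc i} \<inter> C \<noteq> {}" using assms(4) by blast
    then show "i \<in> ?P \<union> ?Q" using \<open>i \<in> {..<k}\<close> by auto
  qed
  moreover have "finite (?P \<union> ?Q)" by auto
  ultimately have k1: "k \<le> card (?P \<union> ?Q)" by (metis card_lessThan card_mono)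
  have k2: "card (?P \<union> ?Q) \<le> card ?P + card ?Q" by (rule card_Un_le)
  have k3: "card ?P \<le> card C"
  proof (rule card_inj_on_le[where f="\<lambda>i. xs ! i"])
    show "inj_on (\<lambda>i. xs ! i) ?P" using dist by (auto simp: inj_on_def k_def nth_eq_iff_index_eq)
    show "(\<lambda>i. xs ! i) ` ?P \<subseteq> C" by auto
    show "finite C" using assms(2,3) finite_subset by blast
  qed
  have k4: "card ?Q \<le> card C"
  proof (rule card_inj_on_le[where f="\<lambda>i. xs ! Suc i"])
    show "inj_on (\<lambda>i. xs ! Suc i) ?Q" using dist by (auto simp: inj_on_def k_def nth_eq_iff_index_eq)
    show "(\<lambda>i. xs ! Suc i) ` ?Q \<subseteq> C" by auto
    show "finite C" using assms(2,3) finite_subset by blast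
  qed
  from k1 k2 k3 k4 have "k \<le> 2 * card C" by linarith
  then show ?thesis by (simp add: k_def)
qed

lemma mgD:
  assumes "mixed_graph V E A"
  shows "finite V" "\<And>e. e \<in> E \<Longrightarrow> \<exists>u v. e = {u, v} \<and> u \<noteq> v \<and> u \<in> V \<and> v \<in> V"
    "\<And>u v. (u, v) \<in> A \<Longrightarrow> u \<noteq> v \<and> u \<in> V \<and> v \<in> V"
    "\<And>u v. (u, v) \<in> A \<Longrightarrow> {u, v} \<notin> E \<and> (v, u) \<notin> A"
  using assms unfolding mixed_graph_def by auto

lemma uedges_sub:
  assumes "mixed_graph V E A"
  shows "\<forall>e\<in>uedges E A. \<exists>u v. e = {u, v} \<and> u \<noteq> v \<and> u \<in> V \<and> v \<in> V"
proof
  fix e assume "e \<in> uedges E A"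
  then consider "e \<in> E" | u v where "e = {u, v}" "(u, v) \<in> A" unfolding uedges_def by blast
  then show "\<exists>u v. e = {u, v} \<and> u \<noteq> v \<and> u \<in> V \<and> v \<in> V"
  proof cases
    case 1 then show ?thesis using mgD(2)[OF assms] by blast
  next
    case 2 then show ?thesis using mgD(3)[OF assms] by blast
  qed
qed

lemma part4:
  assumes "mixed_graph V E A" "V \<noteq> {}"
  shows "maxrank V A \<le> 2 * vertex_cover_number V (uedges E A)"
proof -
  have fin: "finite V" using assms by (simp add: mixed_graph_def)
  obtain xs where xs: "dpath V A xs" "maxrank V A = length xs - 1" using longest[OF fin assms(2)] by blast
  have ex: "\<exists>k C. C \<subseteq> V \<and> card C = k \<and> (\<forall>e\<in>uedges E A. e \<inter> C \<noteq> {})"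
  proof -
    have "\<forall>e\<in>uedges E A. e \<inter> V \<noteq> {}" using uedges_sub[OF assms(1)] by fastforce
    then show ?thesis by blast
  qed
  then obtain C where C: "C \<subseteq> V" "card C = vertex_cover_number V (uedges E A)" "\<forall>e\<in>uedges E A. e \<inter> C \<noteq> {}"
    unfolding vertex_cover_number_def using LeastI_ex[of "\<lambda>k. \<exists>C. C \<subseteq> V \<and> card C = k \<and> (\<forall>e\<in>uedges E A. e \<inter> C \<noteq> {})"]
    by blast
  show ?thesis using vc_bound[OF xs(1) C(1) fin C(3)] xs(2) C(2) by simp
qed

lemma path_trancl:
  assumes "dpath V A xs" "i < j" "j < length xs"
  shows "(xs ! i, xs ! j) \<in> A\<^sup>+"
  using assms(2,3)
proof (induction j)
  case 0 then show ?case by simp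
next
  case (Suc j)
  have e: "(xs ! j, xs ! Suc j) \<in> A" using assms(1) Suc.prems by (simp add: dpath_def)
  show ?case
  proof (cases "i = j")
    case True then show ?thesis using e by auto
  next
    case False
    then have "(xs ! i, xs ! j) \<in> A\<^sup>+" using Suc by auto
    then show ?thesis using e by (meson trancl.trancl_into_trancl)
  qed
qed

lemma part1:
  assumes fin: "finite V" and ac: "acyclic A" and xs: "dpath V A xs"
  shows "length xs \<le> nd_m V E' (A\<^sup>+)"
proof -
  define cls where "cls u = {v \<in> V. same_mixed_type E' (A\<^sup>+) u v}" for u
  have nd: "nd_m V E' (A\<^sup>+) = card (cls ` V)" unfolding nd_m_def cls_def
    by (metis Setcompr_eq_image)
  have inV: "\<And>i. i < length xs \<Longrightarrow> xs ! i \<in> V" using xs by (auto simp: dpath_def)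
  have self: "\<And>i. i < length xs \<Longrightarrow> xs ! i \<in> cls (xs ! i)"
    using inV by (simp add: cls_def same_mixed_type_def)
  have noloop: "\<And>x. (x, x) \<notin> A\<^sup>+" using ac by (simp add: acyclic_def)
  have key: "i = j" if "i < length xs" "j < length xs" "in_nbrs (A\<^sup>+) (xs ! i) = in_nbrs (A\<^sup>+) (xs ! j)" for i j
  proof (rule ccontr)
    assume "i \<noteq> j"
    then consider "i < j" | "j < i" by linarith
    then show False
    proof cases
      case 1
      then have "(xs ! i, xs ! j) \<in> A\<^sup>+" using path_trancl[OF xs] that by blast
      then have "xs ! i \<in> in_nbrs (A\<^sup>+) (xs ! i)" using that(3) by (simp add: in_nbrs_def)
      then show False using noloop by (simp add: in_nbrs_def)
    next
      case 2
      then have "(xs ! j, xs ! i) \<in> A\<^sup>+" using path_trancl[OF xs] that by blast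
      then have "xs ! j \<in> in_nbrs (A\<^sup>+) (xs ! i)" by (simp add: in_nbrs_def)
      then have "xs ! j \<in> in_nbrs (A\<^sup>+) (xs ! j)" using that(3) by simp
      then show False using noloop by (simp add: in_nbrs_def)
    qed
  qed
  have "card {..<length xs} \<le> card (cls ` V)"
  proof (rule card_inj_on_le[where f="\<lambda>i. cls (xs ! i)"])
    show "inj_on (\<lambda>i. cls (xs ! i)) {..<length xs}"
    proof (rule inj_onI)
      fix i j assume ij: "i \<in> {..<length xs}" "j \<in> {..<length xs}" "cls (xs ! i) = cls (xs ! j)"
      then have "xs ! j \<in> cls (xs ! i)" using self by auto
      then have "in_nbrs (A\<^sup>+) (xs ! i) = in_nbrs (A\<^sup>+) (xs ! j)" by (simp add: cls_def same_mixed_type_def)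
      then show "i = j" using key ij by auto
    qed
    show "(\<lambda>i. cls (xs ! i)) ` {..<length xs} \<subseteq> cls ` V" using inV by auto
    show "finite (cls ` V)" using fin by simp
  qed
  then show ?thesis using nd by simp
qed

lemma first_step:
  assumes "(x, y) \<in> R\<^sup>*" "x \<noteq> y" shows "\<exists>z. (x, z) \<in> R"
  using assms by (metis converse_rtranclE)

lemma conn_mono:
  assumes "connected_in F S" "\<And>a b. a \<in> S \<Longrightarrow> b \<in> S \<Longrightarrow> {a, b} \<in> F \<Longrightarrow> {a, b} \<in> F'"
  shows "connected_in F' S"
proof -
  have "{(a, b). {a, b} \<in> F \<and> a \<in> S \<and> b \<in> S} \<subseteq> {(a, b). {a, b} \<in> F' \<and> a \<in> S \<and> b \<in> S}"
    using assms(2) by auto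
  then have "{(a, b). {a, b} \<in> F \<and> a \<in> S \<and> b \<in> S}\<^sup>* \<subseteq> {(a, b). {a, b} \<in> F' \<and> a \<in> S \<and> b \<in> S}\<^sup>*"
    by (rule rtrancl_mono)
  then show ?thesis using assms(1) unfolding connected_in_def by blast
qed

lemma conn_remove_leaf:
  assumes conn: "connected_in F S" and leaf: "\<And>z. {l, z} \<in> F \<Longrightarrow> z = p" and pl: "p \<noteq> l"
  shows "connected_in F (S - {l})"
proof -
  define R where "R = {(a, b). {a, b} \<in> F \<and> a \<in> S \<and> b \<in> S}"
  define R' where "R' = {(a, b). {a, b} \<in> F \<and> a \<in> S - {l} \<and> b \<in> S - {l}}"
  have claim: "(y = l \<and> (x, p) \<in> R'\<^sup>*) \<or> (y \<noteq> l \<and> (x, y) \<in> R'\<^sup>*)"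
    if "(x, y) \<in> R\<^sup>*" "x \<noteq> l" "x \<in> S" for x y
    using that(1)
  proof (induction rule: rtrancl_induct)
    case base then show ?case using that by auto
  next
    case (step y z)
    then have yz: "{y, z} \<in> F" "y \<in> S" "z \<in> S" by (auto simp: R_def)
    show ?case
    proof (cases "y = l")
      case True
      then have "z = p" using leaf yz(1) by blast
      then show ?thesis using step.IH True pl by auto
    next
      case False
      then have xy: "(x, y) \<in> R'\<^sup>*" using step.IH by auto
      show ?thesis
      proof (cases "z = l")
        case True
        then have "{l, y} \<in> F" using yz(1) by (simp add: insert_commute)
        then have "y = p" using leaf by blast
        then show ?thesis using xy True by auto
      next
        case False
        then have "(y, z) \<in> R'" using yz \<open>y \<noteq> l\<close> by (auto simp: R'_def)
        then show ?thesis using xy False by auto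
      qed
    qed
  qed
  show ?thesis unfolding connected_in_def
  proof (intro ballI)
    fix x y assume "x \<in> S - {l}" "y \<in> S - {l}"
    then have "(x, y) \<in> R\<^sup>*" using conn unfolding connected_in_def R_def by blast
    then show "(x, y) \<in> {(a, b). {a, b} \<in> F \<and> a \<in> S - {l} \<and> b \<in> S - {l}}\<^sup>*"
      using claim \<open>x \<in> S - {l}\<close> \<open>y \<in> S - {l}\<close> unfolding R'_def by blast
  qed
qed

lemma treeD:
  assumes "is_tree I T"
  shows "finite I" "I \<noteq> {}" "\<And>e. e \<in> T \<Longrightarrow> \<exists>u v. e = {u, v} \<and> u \<noteq> v \<and> u \<in> I \<and> v \<in> I"
    "connected_in T I" "card T = card I - 1"
  using assms unfolding is_tree_def by auto

lemma edge_neq: "{a, b} = {u, v} \<Longrightarrow> u \<noteq> v \<Longrightarrow> a \<noteq> b"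
  by auto

lemma tree_edge_neq:
  assumes "is_tree I T" "{a, b} \<in> T" shows "a \<noteq> b" "a \<in> I" "b \<in> I"
proof -
  obtain u v where "{a, b} = {u, v}" "u \<noteq> v" "u \<in> I" "v \<in> I" using treeD(3)[OF assms(1) assms(2)] by blast
  then show "a \<noteq> b" "a \<in> I" "b \<in> I" by (auto simp: doubleton_eq_iff)
qed

lemma tree_finite_edges:
  assumes "is_tree I T" shows "finite T"
proof -
  have "T \<subseteq> Pow I" using treeD(3)[OF assms] by blast
  moreover have "finite I" using treeD(1)[OF assms] .
  ultimately show ?thesis using finite_subset by blast
qed

lemma degree_sum:
  assumes "is_tree I T"
  shows "(\<Sum>i\<in>I. card {e\<in>T. i \<in> e}) = 2 * card T"
proof -
  have fI: "finite I" using assms by (simp add: is_tree_def)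
  have fT: "finite T" using tree_finite_edges[OF assms] .
  have "(\<Sum>i\<in>I. card {e\<in>T. i \<in> e}) = (\<Sum>i\<in>I. \<Sum>e\<in>T. if i \<in> e then 1 else 0)"
    using fT by (simp add: sum.If_cases Int_def)
  also have "\<dots> = (\<Sum>e\<in>T. \<Sum>i\<in>I. if i \<in> e then 1 else 0)" by (rule sum.swap)
  also have "\<dots> = (\<Sum>e\<in>T. (2::nat))"
  proof (rule sum.cong[OF refl])
    fix e assume "e \<in> T"
    then obtain u v where uv: "e = {u, v}" "u \<noteq> v" "u \<in> I" "v \<in> I" using treeD(3)[OF assms] by blast
    have "(\<Sum>i\<in>I. if i \<in> e then 1 else 0) = card (I \<inter> e)" using fI by (simp add: sum.If_cases)
    also have "I \<inter> e = {u, v}" using uv by auto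
    finally show "(\<Sum>i\<in>I. if i \<in> e then 1 else (0::nat)) = 2" using uv by simp
  qed
  also have "\<dots> = 2 * card T" by simp
  finally show ?thesis .
qed

lemma leaf_exists:
  assumes tree: "is_tree I T" and two: "card I \<ge> 2"
  shows "\<exists>l p. l \<in> I \<and> p \<in> I \<and> l \<noteq> p \<and> {l, p} \<in> T \<and> (\<forall>z. {l, z} \<in> T \<longrightarrow> z = p)"
proof -
  have fI: "finite I" using treeD(1)[OF tree] .
  have fT: "finite T" using tree_finite_edges[OF tree] .
  have cT: "card T = card I - 1" using treeD(5)[OF tree] .
  have "\<exists>i\<in>I. card {e\<in>T. i \<in> e} < 2"
  proof (rule ccontr)
    assume "\<not> ?thesis"
    then have "\<forall>i\<in>I. 2 \<le> card {e\<in>T. i \<in> e}" by auto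
    then have "(\<Sum>i\<in>I. (2::nat)) \<le> (\<Sum>i\<in>I. card {e\<in>T. i \<in> e})" by (intro sum_mono) auto
    then have "2 * card I \<le> 2 * card T" using degree_sum[OF tree] by simp
    then show False using cT two by linarith
  qed
  then obtain i where i: "i \<in> I" "card {e\<in>T. i \<in> e} < 2" by blast
  obtain j where j: "j \<in> I" "j \<noteq> i"
  proof -
    have "I - {i} \<noteq> {}"
    proof
      assume "I - {i} = {}"
      then have "I = {i}" using i(1) by blast
      then show False using two by simp
    qed
    then show ?thesis using that by blast
  qed
  have ij: "(i, j) \<in> {(a, b). {a, b} \<in> T \<and> a \<in> I \<and> b \<in> I}\<^sup>*"
    using treeD(4)[OF tree] i(1) j(1) unfolding connected_in_def by blast
  have "i \<noteq> j" using j(2) by simp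
  from first_step[OF ij this] obtain z where "(i, z) \<in> {(a, b). {a, b} \<in> T \<and> a \<in> I \<and> b \<in> I}"
    by blast
  then have z: "{i, z} \<in> T" "z \<in> I" by auto
  have zi: "i \<noteq> z" using tree_edge_neq(1)[OF tree z(1)] .
  have "{i, z} \<in> {e\<in>T. i \<in> e}" using z by simp
  then have "{e\<in>T. i \<in> e} \<noteq> {}" by blast
  moreover have "finite {e\<in>T. i \<in> e}" using fT by simp
  ultimately have "card {e\<in>T. i \<in> e} \<noteq> 0" by (metis card_0_eq)
  then have "card {e\<in>T. i \<in> e} = 1" using i(2) by linarith
  then obtain e0 where e0: "{e\<in>T. i \<in> e} = {e0}" by (rule card_1_singletonE)
  have "\<forall>z'. {i, z'} \<in> T \<longrightarrow> z' = z"
  proof (intro allI impI)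
    fix z' assume "{i, z'} \<in> T"
    then have "{i, z'} \<in> {e\<in>T. i \<in> e}" by simp
    then have 1: "{i, z'} = e0" by (metis e0 singletonD)
    have "{i, z} \<in> {e\<in>T. i \<in> e}" using z by simp
    then have "{i, z} = e0" by (metis e0 singletonD)
    then have eq: "{i, z'} = {i, z}" using 1 by (simp only:)
    then have "z \<in> {i, z'}" by blast
    then show "z' = z" using zi by blast
  qed
  then show ?thesis using i(1) z zi by blast
qed


lemma helly:
  assumes "is_tree I T" "card I = n"
    "\<forall>k\<in>K. S k \<subseteq> I \<and> S k \<noteq> {} \<and> connected_in T (S k)"
    "\<forall>k\<in>K. \<forall>k'\<in>K. S k \<inter> S k' \<noteq> {}"
  shows "\<exists>i\<in>I. \<forall>k\<in>K. i \<in> S k"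
  using assms
proof (induction n arbitrary: I T S)
  case 0
  then show ?case using treeD(1,2)[OF "0.prems"(1)] by simp
next
  case (Suc n)
  note tree = Suc.prems(1)
  note SP = Suc.prems(3)
  note SI = Suc.prems(4)
  have fI: "finite I" using treeD(1)[OF tree] .
  have fT: "finite T" using tree_finite_edges[OF tree] .
  show ?case
  proof (cases "n = 0")
    case True
    then have "card I = 1" using Suc.prems(2) by simp
    then obtain i where I: "I = {i}" by (rule card_1_singletonE)
    have "\<forall>k\<in>K. i \<in> S k"
    proof
      fix k assume "k \<in> K"
      then have "S k \<subseteq> {i}" "S k \<noteq> {}" using SP I by auto
      then show "i \<in> S k" by blast
    qed
    then show ?thesis using I by blast
  next
    case False
    then have "card I \<ge> 2" using Suc.prems(2) by simp
    then obtain l p where lp: "l \<in> I" "p \<in> I" "l \<noteq> p" "{l, p} \<in> T" and leaf: "\<And>z. {l, z} \<in> T \<Longrightarrow> z = p"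
      using leaf_exists[OF tree] by blast
    show ?thesis
    proof (cases "\<exists>k\<in>K. S k = {l}")
      case True
      then obtain k0 where k0: "k0 \<in> K" "S k0 = {l}" by blast
      have "\<forall>k\<in>K. l \<in> S k"
      proof
        fix k assume "k \<in> K"
        then have "S k0 \<inter> S k \<noteq> {}" using SI k0(1) by blast
        then show "l \<in> S k" using k0(2) by simp
      qed
      then show ?thesis using lp(1) by blast
    next
      case False
      define I' where "I' = I - {l}"
      define T' where "T' = T - {{l, p}}"
      define S' where "S' k = S k - {l}" for k
      have pl: "p \<noteq> l" using lp(3) by simp
      have edge_ok: "\<And>a b. a \<in> I' \<Longrightarrow> b \<in> I' \<Longrightarrow> {a, b} \<in> T \<Longrightarrow> {a, b} \<in> T'"
      proof -
        fix a b assume "a \<in> I'" "b \<in> I'" "{a, b} \<in> T"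
        then have "l \<notin> {a, b}" by (auto simp: I'_def)
        then have "{a, b} \<noteq> {l, p}" by blast
        then show "{a, b} \<in> T'" using \<open>{a, b} \<in> T\<close> by (simp add: T'_def)
      qed
      have tree': "is_tree I' T'"
        unfolding is_tree_def
      proof (intro conjI ballI)
        show "finite I'" using fI by (simp add: I'_def)
        show "I' \<noteq> {}" using lp(2) pl by (auto simp: I'_def)
        fix e assume "e \<in> T'"
        then have eT: "e \<in> T" "e \<noteq> {l, p}" by (auto simp: T'_def)
        then obtain u v where uv: "e = {u, v}" "u \<noteq> v" "u \<in> I" "v \<in> I" using treeD(3)[OF tree] by blast
        have "u \<noteq> l"
        proof
          assume "u = l"
          then have "v = p" using leaf eT(1) uv(1) by blast
          then show False using eT(2) uv(1) \<open>u = l\<close> by simp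
        qed
        moreover have "v \<noteq> l"
        proof
          assume "v = l"
          then have "{l, u} \<in> T" using eT(1) uv(1) by (simp add: insert_commute)
          then have "u = p" using leaf by blast
          then show False using eT(2) uv(1) \<open>v = l\<close> by (simp add: insert_commute)
        qed
        ultimately show "\<exists>u v. e = {u, v} \<and> u \<noteq> v \<and> u \<in> I' \<and> v \<in> I'"
          using uv by (auto simp: I'_def)
      next
        have "connected_in T (I - {l})" using conn_remove_leaf[OF treeD(4)[OF tree] leaf pl] .
        then show "connected_in T' I'" unfolding I'_def using edge_ok[unfolded I'_def] by (rule conn_mono)
      next
        have "card T' = card T - 1" using fT lp(4) by (simp add: T'_def)
        moreover have "card I' = card I - 1" using fI lp(1) by (simp add: I'_def)
        ultimately show "card T' = card I' - 1" using treeD(5)[OF tree] by simp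
      qed
      have cI': "card I' = n" using fI lp(1) Suc.prems(2) by (simp add: I'_def)
      have p_in: "p \<in> S k" if "k \<in> K" "l \<in> S k" for k
      proof -
        have "S k \<noteq> {l}" using False that(1) by blast
        moreover have "S k \<noteq> {}" using SP that(1) by blast
        ultimately obtain y where y: "y \<in> S k" "y \<noteq> l" by blast
        have "(l, y) \<in> {(a, b). {a, b} \<in> T \<and> a \<in> S k \<and> b \<in> S k}\<^sup>*"
          using SP that y(1) unfolding connected_in_def by blast
        from first_step[OF this y(2)[symmetric]] obtain z where
          "(l, z) \<in> {(a, b). {a, b} \<in> T \<and> a \<in> S k \<and> b \<in> S k}" by blast
        then have "{l, z} \<in> T" "z \<in> S k" by auto
        then show "p \<in> S k" using leaf by blast
      qed
      have SP': "\<forall>k\<in>K. S' k \<subseteq> I' \<and> S' k \<noteq> {} \<and> connected_in T' (S' k)"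
      proof
        fix k assume k: "k \<in> K"
        have "S' k \<subseteq> I'" using SP k by (auto simp: S'_def I'_def)
        moreover have "S' k \<noteq> {}"
        proof -
          have "S k \<noteq> {l}" using False k by blast
          moreover have "S k \<noteq> {}" using SP k by blast
          ultimately show ?thesis by (auto simp: S'_def)
        qed
        moreover have "connected_in T' (S' k)"
        proof -
          have "connected_in T (S k - {l})" using conn_remove_leaf[OF _ leaf pl] SP k by blast
          then have "connected_in T (S' k)" by (simp add: S'_def)
          then show ?thesis
          proof (rule conn_mono)
            fix a b assume "a \<in> S' k" "b \<in> S' k" "{a, b} \<in> T"
            then show "{a, b} \<in> T'" using edge_ok \<open>S' k \<subseteq> I'\<close> by blast
          qed
        qed
        ultimately show "S' k \<subseteq> I' \<and> S' k \<noteq> {} \<and> connected_in T' (S' k)" by blast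
      qed
      have SI': "\<forall>k\<in>K. \<forall>k'\<in>K. S' k \<inter> S' k' \<noteq> {}"
      proof (intro ballI)
        fix k k' assume k: "k \<in> K" "k' \<in> K"
        then obtain x where x: "x \<in> S k" "x \<in> S k'" using SI by blast
        show "S' k \<inter> S' k' \<noteq> {}"
        proof (cases "x = l")
          case True
          then have "p \<in> S k" "p \<in> S k'" using p_in k x by blast+
          then show ?thesis using pl by (auto simp: S'_def)
        next
          case False
          then show ?thesis using x by (auto simp: S'_def)
        qed
      qed
      obtain i where "i \<in> I'" "\<forall>k\<in>K. i \<in> S' k" using Suc.IH[OF tree' cI' SP' SI'] by blast
      then show ?thesis by (auto simp: I'_def S'_def)
    qed
  qed
qed

lemma tdD:
  assumes "tree_decomp V F I T B"
  shows "is_tree I T" "\<And>i. i \<in> I \<Longrightarrow> B i \<subseteq> V" "\<And>v. v \<in> V \<Longrightarrow> \<exists>i\<in>I. v \<in> B i"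
    "\<And>e. e \<in> F \<Longrightarrow> \<exists>i\<in>I. e \<subseteq> B i" "\<And>v. v \<in> V \<Longrightarrow> connected_in T {i \<in> I. v \<in> B i}"
  using assms unfolding tree_decomp_def by auto

lemma trivial_td:
  assumes "finite V" "\<forall>e\<in>F. e \<subseteq> V"
  shows "tree_decomp V F {0} {} (\<lambda>_. V)"
proof -
  have c: "connected_in {} {0::nat}" unfolding connected_in_def by simp
  have t: "is_tree {0::nat} {}" unfolding is_tree_def using c by simp
  have "\<forall>v\<in>V. {i \<in> {0::nat}. v \<in> V} = {0}" by auto
  then have "\<forall>v\<in>V. connected_in {} {i \<in> {0::nat}. v \<in> V}" using c by simp
  then show ?thesis unfolding tree_decomp_def using t assms(2) by auto
qed

lemma part2:
  assumes mg: "mixed_graph V E A" and ac: "acyclic A" and xs: "dpath V A xs"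
  shows "length xs - 1 \<le> treewidth V (uedges (tc_edges E A) (A\<^sup>+))"
proof -
  define F where "F = uedges (tc_edges E A) (A\<^sup>+)"
  have fin: "finite V" using mgD(1)[OF mg] .
  have AV: "A \<subseteq> V \<times> V" using mgD(3)[OF mg] by auto
  then have AV': "A\<^sup>+ \<subseteq> V \<times> V" by (rule trancl_subset_Sigma)
  have Fsub: "\<forall>e\<in>F. e \<subseteq> V"
  proof
    fix e assume "e \<in> F"
    then consider "e \<in> E" | u v where "e = {u, v}" "(u, v) \<in> A\<^sup>+"
      unfolding F_def uedges_def tc_edges_def by blast
    then show "e \<subseteq> V"
    proof cases
      case 1 then show ?thesis using mgD(2)[OF mg] by blast
    next
      case 2 then show ?thesis using AV' by blast
    qed
  qed
  have ex: "\<exists>k I T B. tree_decomp V F I T B \<and> (\<forall>i\<in>I. card (B i) \<le> k + 1)"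
    using trivial_td[OF fin Fsub] by (intro exI[of _ "card V"] exI[of _ "{0}"] exI[of _ "{}"] exI[of _ "\<lambda>_. V"]) simp
  obtain I T B where td: "tree_decomp V F I T B" and bags: "\<forall>i\<in>I. card (B i) \<le> treewidth V F + 1"
    using LeastI_ex[OF ex] unfolding treewidth_def by blast
  define S where "S v = {i \<in> I. v \<in> B i}" for v
  have inV: "set xs \<subseteq> V" using xs by (simp add: dpath_def)
  have SP: "\<forall>k\<in>set xs. S k \<subseteq> I \<and> S k \<noteq> {} \<and> connected_in T (S k)"
  proof
    fix k assume k: "k \<in> set xs"
    then have "k \<in> V" using inV by blast
    then show "S k \<subseteq> I \<and> S k \<noteq> {} \<and> connected_in T (S k)"
      using tdD(3,5)[OF td] unfolding S_def by blast
  qed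
  have SI: "\<forall>k\<in>set xs. \<forall>k'\<in>set xs. S k \<inter> S k' \<noteq> {}"
  proof (intro ballI)
    fix u v assume uv: "u \<in> set xs" "v \<in> set xs"
    show "S u \<inter> S v \<noteq> {}"
    proof (cases "u = v")
      case True then show ?thesis using SP uv by simp
    next
      case False
      obtain i j where ij: "i < length xs" "j < length xs" "u = xs ! i" "v = xs ! j"
        using uv by (metis in_set_conv_nth)
      have "i \<noteq> j" using False ij by blast
      then consider "i < j" | "j < i" by linarith
      then have "{u, v} \<in> F"
      proof cases
        case 1
        then have "(u, v) \<in> A\<^sup>+" using path_trancl[OF xs 1 ij(2)] ij by simp
        then show ?thesis unfolding F_def uedges_def by blast
      next
        case 2
        then have "(v, u) \<in> A\<^sup>+" using path_trancl[OF xs 2 ij(1)] ij by simp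
        then have "{v, u} \<in> F" unfolding F_def uedges_def by blast
        then show ?thesis by (simp add: insert_commute)
      qed
      then obtain b where "b \<in> I" "{u, v} \<subseteq> B b" using tdD(4)[OF td] by blast
      then have "b \<in> S u \<inter> S v" unfolding S_def by blast
      then show ?thesis by blast
    qed
  qed
  obtain b where b: "b \<in> I" "\<forall>k\<in>set xs. b \<in> S k"
    using helly[OF tdD(1)[OF td] refl SP SI] by blast
  then have "set xs \<subseteq> B b" unfolding S_def by blast
  moreover have "finite (B b)" using tdD(2)[OF td b(1)] fin finite_subset by blast
  ultimately have "card (set xs) \<le> card (B b)" by (rule card_mono[rotated])
  moreover have "card (set xs) = length xs" using xs by (simp add: dpath_def distinct_card)
  ultimately have "length xs \<le> treewidth V F + 1" using bags b(1) by force
  then show ?thesis unfolding F_def by simp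
qed

lemma step_desc:
  assumes tr: "trans R"
    and chain: "\<forall>x y z. (x, y) \<in> R \<longrightarrow> (x, z) \<in> R \<longrightarrow> y = z \<or> (y, z) \<in> R \<or> (z, y) \<in> R"
    and mono: "\<forall>x y. (x, y) \<in> R \<longrightarrow> dep y < (dep x :: nat)"
    and x: "x = m \<or> (x, m) \<in> R" and xy: "(x, y) \<in> R \<or> (y, x) \<in> R" and dm: "dep m \<le> dep y"
  shows "y = m \<or> (y, m) \<in> R"
  using xy
proof
  assume yx: "(y, x) \<in> R"
  show ?thesis using x
  proof
    assume "x = m" then show ?thesis using yx by simp
  next
    assume "(x, m) \<in> R" then show ?thesis using yx tr by (meson transD)
  qed
next
  assume xy: "(x, y) \<in> R"
  show ?thesis using x
  proof
    assume "x = m" then show ?thesis using xy mono dm by (metis leD)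
  next
    assume xm: "(x, m) \<in> R"
    from chain[rule_format, OF xy xm] show ?thesis using mono dm by (metis leD)
  qed
qed

lemma walk:
  assumes tr: "trans R"
    and chain: "\<forall>x y z. (x, y) \<in> R \<longrightarrow> (x, z) \<in> R \<longrightarrow> y = z \<or> (y, z) \<in> R \<or> (z, y) \<in> R"
    and mono: "\<forall>x y. (x, y) \<in> R \<longrightarrow> dep y < (dep x :: nat)"
  shows "successively (\<lambda>a b. (a, b) \<in> R \<or> (b, a) \<in> R) (m' # zs) \<Longrightarrow> (m' = m \<or> (m', m) \<in> R)
     \<Longrightarrow> \<forall>x\<in>set zs. dep m \<le> dep x \<Longrightarrow> \<forall>x\<in>set zs. x = m \<or> (x, m) \<in> R"
proof (induction zs arbitrary: m')
  case Nil then show ?case by simp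
next
  case (Cons z zs)
  have "z = m \<or> (z, m) \<in> R"
    using step_desc[OF tr chain mono, where x=m' and m=m and y=z] Cons.prems by simp
  moreover have "\<forall>x\<in>set zs. x = m \<or> (x, m) \<in> R"
    using Cons.IH[of z] Cons.prems calculation by simp
  ultimately show ?case by simp
qed

lemma count_path:
  assumes tr: "trans R"
    and chain: "\<forall>x y z. (x, y) \<in> R \<longrightarrow> (x, z) \<in> R \<longrightarrow> y = z \<or> (y, z) \<in> R \<or> (z, y) \<in> R"
    and mono: "\<forall>x y. (x, y) \<in> R \<longrightarrow> dep y < (dep x :: nat)"
    and hX: "\<forall>x\<in>X. dep x \<le> h"
  shows "distinct xs \<Longrightarrow> set xs \<subseteq> X \<Longrightarrow> successively (\<lambda>a b. (a, b) \<in> R \<or> (b, a) \<in> R) xs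
     \<Longrightarrow> \<forall>x\<in>set xs. d \<le> dep x \<Longrightarrow> length xs + 1 \<le> 2 ^ (h + 1 - d)"
proof (induction "length xs" arbitrary: xs d rule: less_induct)
  case less
  let ?C = "\<lambda>a b. (a, b) \<in> R \<or> (b, a) \<in> R"
  show ?case
  proof (cases "xs = []")
    case True then show ?thesis by simp
  next
    case False
    define dm where "dm = Min (dep ` set xs)"
    have "dm \<in> dep ` set xs" unfolding dm_def using False by (intro Min_in) auto
    then obtain m where m: "m \<in> set xs" "dep m = dm" by blast
    have mmin: "\<forall>x\<in>set xs. dep m \<le> dep x" using m(2) unfolding dm_def by simp
    obtain ys zs where xs: "xs = ys @ m # zs" using split_list[OF m(1)] by blast
    have suc: "successively ?C (ys @ m # zs)" using less.prems(3) xs by simp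
    have s1: "successively ?C (m # zs)" using suc by (simp add: successively_append_iff)
    have s2': "successively ?C (rev (ys @ [m]))"
    proof -
      have "successively ?C (ys @ [m])" using suc successively_append_iff[of ?C "ys @ [m]" zs]
        by (simp add: successively_Cons)
      then have "successively (\<lambda>x y. ?C y x) (ys @ [m])" by (rule successively_mono) auto
      then show ?thesis unfolding successively_rev .
    qed
    then have s2: "successively ?C (m # rev ys)" by simp
    have dz: "\<forall>x\<in>set zs. x = m \<or> (x, m) \<in> R"
      using walk[OF tr chain mono s1] mmin xs by simp
    have dy: "\<forall>x\<in>set (rev ys). x = m \<or> (x, m) \<in> R"
      using walk[OF tr chain mono s2] mmin xs by simp
    have dist: "distinct ys" "distinct zs" "m \<notin> set ys" "m \<notin> set zs" using less.prems(1) xs by auto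
    have gz: "\<forall>x\<in>set zs. dep m + 1 \<le> dep x" using dz dist(4) mono by fastforce
    have gy: "\<forall>x\<in>set ys. dep m + 1 \<le> dep x" using dy dist(3) mono by fastforce
    have mX: "m \<in> X" using less.prems(2) m(1) by blast
    have mh: "dep m \<le> h" using hX mX by blast
    have md: "d \<le> dep m" using less.prems(4) m(1) by blast
    have sy: "successively ?C ys" using suc by (simp add: successively_append_iff)
    have sz: "successively ?C zs" using s1 by (cases zs) auto
    have ly: "length ys + 1 \<le> 2 ^ (h + 1 - (dep m + 1))"
      using less.hyps[of ys "dep m + 1"] xs dist(1) less.prems(2) sy gy by simp
    have lz: "length zs + 1 \<le> 2 ^ (h + 1 - (dep m + 1))"
      using less.hyps[of zs "dep m + 1"] xs dist(2) less.prems(2) sz gz by simp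
    have "length xs + 1 = (length ys + 1) + (length zs + 1)" using xs by simp
    also have "\<dots> \<le> 2 * 2 ^ (h + 1 - (dep m + 1))" using ly lz by simp
    also have "\<dots> = 2 ^ (h + 1 - dep m)" using mh
      by (metis Suc_diff_le Suc_eq_plus1 add_Suc_right diff_Suc_Suc power_Suc)
    also have "\<dots> \<le> 2 ^ (h + 1 - d)" using md by (intro power_increasing) auto
    finally show ?thesis .
  qed
qed

lemma func_trancl_chain:
  assumes fnl0: "\<forall>x y z. (x, y) \<in> P \<longrightarrow> (x, z) \<in> P \<longrightarrow> y = z"
  shows "(x, y) \<in> P\<^sup>+ \<Longrightarrow> \<forall>z. (x, z) \<in> P\<^sup>+ \<longrightarrow> y = z \<or> (y, z) \<in> P\<^sup>+ \<or> (z, y) \<in> P\<^sup>+"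
proof (induction rule: converse_trancl_induct)
  have fnl: "\<And>x y z. (x, y) \<in> P \<Longrightarrow> (x, z) \<in> P \<Longrightarrow> y = z" using fnl0 by blast
  case (base a)
  show ?case
  proof (intro allI impI)
    fix z assume "(a, z) \<in> P\<^sup>+"
    then obtain w' where w': "(a, w') \<in> P" "(w', z) \<in> P\<^sup>*" using tranclD by metis
    then have "w' = y" using fnl base by blast
    then show "y = z \<or> (y, z) \<in> P\<^sup>+ \<or> (z, y) \<in> P\<^sup>+" using w'(2) rtrancl_eq_or_trancl by metis
  qed
next
  have fnl: "\<And>x y z. (x, y) \<in> P \<Longrightarrow> (x, z) \<in> P \<Longrightarrow> y = z" using fnl0 by blast
  case (step a w)
  show ?case
  proof (intro allI impI)
    fix z assume "(a, z) \<in> P\<^sup>+"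
    then obtain w' where w': "(a, w') \<in> P" "(w', z) \<in> P\<^sup>*" using tranclD by metis
    then have ww: "w' = w" using fnl step.hyps(1) by blast
    show "y = z \<or> (y, z) \<in> P\<^sup>+ \<or> (z, y) \<in> P\<^sup>+"
    proof (cases "z = w")
      case True then show ?thesis using step.hyps(2) by blast
    next
      case False
      then have "(w, z) \<in> P\<^sup>+" using w'(2) ww rtrancl_eq_or_trancl by metis
      then show ?thesis using step.IH by blast
    qed
  qed
qed

lemma efD:
  assumes "elim_forest V F par"
  shows "\<And>v u. v \<in> V \<Longrightarrow> par v = Some u \<Longrightarrow> u \<in> V"
    "acyclic {(v, u). v \<in> V \<and> par v = Some u}"
    "\<And>e. e \<in> F \<Longrightarrow> \<exists>u v. e = {u, v} \<and> (u, v) \<in> forest_anc V par"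
  using assms unfolding elim_forest_def by auto

lemma forest_props:
  assumes ef: "elim_forest V F par" and fin: "finite V"
  shows "trans (forest_anc V par)"
    "\<forall>x y z. (x, y) \<in> forest_anc V par \<longrightarrow> (x, z) \<in> forest_anc V par \<longrightarrow>
        y = z \<or> (y, z) \<in> forest_anc V par \<or> (z, y) \<in> forest_anc V par"
    "\<forall>x y. (x, y) \<in> forest_anc V par \<longrightarrow> forest_depth V par y < forest_depth V par x"
    "\<forall>v\<in>V. forest_depth V par v \<le> card V + 1"
proof -
  define P where "P = {(v, u). v \<in> V \<and> par v = Some u}"
  have anc: "forest_anc V par = P\<^sup>+" unfolding forest_anc_def P_def ..
  show "trans (forest_anc V par)" unfolding anc by (rule trans_trancl)
  have fnl: "\<forall>x y z. (x, y) \<in> P \<longrightarrow> (x, z) \<in> P \<longrightarrow> y = z" unfolding P_def by auto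
  show "\<forall>x y z. (x, y) \<in> forest_anc V par \<longrightarrow> (x, z) \<in> forest_anc V par \<longrightarrow>
        y = z \<or> (y, z) \<in> forest_anc V par \<or> (z, y) \<in> forest_anc V par"
  proof (intro allI impI)
    fix x y z assume a: "(x, y) \<in> forest_anc V par" "(x, z) \<in> forest_anc V par"
    have "\<forall>z. (x, z) \<in> P\<^sup>+ \<longrightarrow> y = z \<or> (y, z) \<in> P\<^sup>+ \<or> (z, y) \<in> P\<^sup>+"
      using func_trancl_chain[OF fnl, of x y] a(1)[unfolded anc] .
    then show "y = z \<or> (y, z) \<in> forest_anc V par \<or> (z, y) \<in> forest_anc V par"
      using a(2)[unfolded anc] unfolding anc by blast
  qed
  have PV: "P \<subseteq> V \<times> V" unfolding P_def using efD(1)[OF ef] by auto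
  then have PV': "P\<^sup>+ \<subseteq> V \<times> V" by (rule trancl_subset_Sigma)
  have acP: "acyclic P" using efD(2)[OF ef] unfolding P_def .
  have ac: "\<And>x. (x, x) \<notin> P\<^sup>+" using acP unfolding acyclic_def by blast
  have finA: "\<And>x. finite {u. (x, u) \<in> P\<^sup>+}"
  proof -
    fix x
    have "{u. (x, u) \<in> P\<^sup>+} \<subseteq> V" using PV' by blast
    then show "finite {u. (x, u) \<in> P\<^sup>+}" using fin by (rule finite_subset)
  qed
  show "\<forall>x y. (x, y) \<in> forest_anc V par \<longrightarrow> forest_depth V par y < forest_depth V par x"
  proof (intro allI impI)
    fix x y assume "(x, y) \<in> forest_anc V par"
    then have xy: "(x, y) \<in> P\<^sup>+" using anc by simp
    have "{u. (y, u) \<in> P\<^sup>+} \<subset> {u. (x, u) \<in> P\<^sup>+}"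
    proof
      show "{u. (y, u) \<in> P\<^sup>+} \<subseteq> {u. (x, u) \<in> P\<^sup>+}"
      proof
        fix u assume "u \<in> {u. (y, u) \<in> P\<^sup>+}"
        then have "(y, u) \<in> P\<^sup>+" by simp
        then have "(x, u) \<in> P\<^sup>+" using xy by (rule trancl_trans[rotated])
        then show "u \<in> {u. (x, u) \<in> P\<^sup>+}" by simp
      qed
      show "{u. (y, u) \<in> P\<^sup>+} \<noteq> {u. (x, u) \<in> P\<^sup>+}"
      proof
        assume eq: "{u. (y, u) \<in> P\<^sup>+} = {u. (x, u) \<in> P\<^sup>+}"
        have "y \<in> {u. (x, u) \<in> P\<^sup>+}" using xy by simp
        then have "y \<in> {u. (y, u) \<in> P\<^sup>+}" using eq by simp
        then show False using ac by simp
      qed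
    qed
    then have "card {u. (y, u) \<in> P\<^sup>+} < card {u. (x, u) \<in> P\<^sup>+}" using finA by (rule psubset_card_mono[rotated])
    then show "forest_depth V par y < forest_depth V par x" unfolding forest_depth_def anc by simp
  qed
  show "\<forall>v\<in>V. forest_depth V par v \<le> card V + 1"
  proof
    fix v assume "v \<in> V"
    have "{u. (v, u) \<in> P\<^sup>+} \<subseteq> V" using PV' by blast
    then have "card {u. (v, u) \<in> P\<^sup>+} \<le> card V" using fin by (rule card_mono[rotated])
    then show "forest_depth V par v \<le> card V + 1" unfolding forest_depth_def anc by simp
  qed
qed

lemma ef_exists:
  assumes fin: "finite V" and FV: "\<forall>e\<in>F. \<exists>u v. e = {u, v} \<and> u \<noteq> v \<and> u \<in> V \<and> v \<in> V"
  shows "\<exists>par. elim_forest V F par"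
proof -
  define n where "n = card V"
  obtain g where g: "bij_betw g {0..<n} V" using ex_bij_betw_nat_finite[OF fin] n_def by blast
  define f where "f = the_inv_into {0..<n} g"
  have fg: "\<And>i. i < n \<Longrightarrow> f (g i) = i" unfolding f_def
    using g by (simp add: bij_betw_def the_inv_into_f_f)
  have gf: "\<And>v. v \<in> V \<Longrightarrow> g (f v) = v" unfolding f_def
    using g by (simp add: f_the_inv_into_f_bij_betw)
  have fV: "\<And>v. v \<in> V \<Longrightarrow> f v < n"
    using g unfolding f_def by (metis atLeastLessThan_iff bij_betw_the_inv_into bij_betwE)
  have gV: "\<And>i. i < n \<Longrightarrow> g i \<in> V" using g by (auto simp: bij_betw_def)
  define par where "par v = (if v \<in> V \<and> Suc (f v) < n then Some (g (Suc (f v))) else None)" for v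
  define P where "P = {(v, u). v \<in> V \<and> par v = Some u}"
  have Pf: "\<And>v u. (v, u) \<in> P \<Longrightarrow> f v < f u"
  proof -
    fix v u assume "(v, u) \<in> P"
    then have "v \<in> V" "Suc (f v) < n" "u = g (Suc (f v))" unfolding P_def par_def by (auto split: if_splits)
    then show "f v < f u" using fg by simp
  qed
  define L where "L = {(v, u). f v < f u}"
  have "P \<subseteq> L" using Pf unfolding L_def by auto
  then have "P\<^sup>+ \<subseteq> L\<^sup>+" using trancl_mono by blast
  moreover have "trans L" unfolding L_def trans_def by auto
  ultimately have PL: "P\<^sup>+ \<subseteq> L" by simp
  have acy: "acyclic P" unfolding acyclic_def using PL unfolding L_def by blast
  have base: "\<And>j. Suc j < n \<Longrightarrow> (g j, g (Suc j)) \<in> P"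
    unfolding P_def par_def using gV fg by simp
  have chainP: "\<And>k. i + Suc k < n \<Longrightarrow> (g i, g (i + Suc k)) \<in> P\<^sup>+" for i
  proof -
    fix k show "i + Suc k < n \<Longrightarrow> (g i, g (i + Suc k)) \<in> P\<^sup>+"
    proof (induction k)
      case 0 then show ?case using base[of i] by auto
    next
      case (Suc k)
      then have "(g i, g (i + Suc k)) \<in> P\<^sup>+" by simp
      moreover have "(g (i + Suc k), g (i + Suc (Suc k))) \<in> P" using base[of "i + Suc k"] Suc.prems by simp
      ultimately show ?case by (rule trancl_into_trancl)
    qed
  qed
  have lt: "(a, b) \<in> P\<^sup>+" if ab: "a \<in> V" "b \<in> V" "f a < f b" for a b
  proof -
    obtain k where k: "f b = f a + Suc k" using less_imp_Suc_add[OF ab(3)] by auto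
    have "(g (f a), g (f a + Suc k)) \<in> P\<^sup>+" using chainP[of "f a" k] k fV[OF ab(2)] by simp
    then show ?thesis using gf[OF ab(1)] gf[OF ab(2)] k by simp
  qed
  have edges: "\<forall>e\<in>F. \<exists>u v. e = {u, v} \<and> (u, v) \<in> forest_anc V par"
  proof
    fix e assume "e \<in> F"
    then obtain u v where uv: "e = {u, v}" "u \<noteq> v" "u \<in> V" "v \<in> V" using FV by blast
    have "f u \<noteq> f v"
    proof
      assume "f u = f v"
      then have "g (f u) = g (f v)" by simp
      then show False using gf uv by simp
    qed
    then consider "f u < f v" | "f v < f u" by linarith
    then show "\<exists>u v. e = {u, v} \<and> (u, v) \<in> forest_anc V par"
    proof cases
      case 1
      then have "(u, v) \<in> P\<^sup>+" using lt uv by blast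
      then show ?thesis using uv(1) unfolding forest_anc_def P_def by blast
    next
      case 2
      then have "(v, u) \<in> P\<^sup>+" using lt uv by blast
      moreover have "e = {v, u}" using uv(1) by (simp add: insert_commute)
      ultimately show ?thesis unfolding forest_anc_def P_def by blast
    qed
  qed
  have "\<forall>v\<in>V. \<forall>u. par v = Some u \<longrightarrow> u \<in> V"
    unfolding par_def using gV by auto
  then have "elim_forest V F par" unfolding elim_forest_def using acy edges unfolding P_def by blast
  then show ?thesis by blast
qed

lemma part3:
  assumes mg: "mixed_graph V E A" and xs: "dpath V A xs"
  shows "int (length xs - 1) \<le> 2 ^ treedepth V (uedges E A) - 2"
proof -
  define F where "F = uedges E A"
  have fin: "finite V" using mgD(1)[OF mg] .
  obtain par0 where par0: "elim_forest V F par0" using ef_exists[OF fin uedges_sub[OF mg]] unfolding F_def by blast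
  have ex: "\<exists>h par. elim_forest V F par \<and> (\<forall>v\<in>V. forest_depth V par v \<le> h)"
    using par0 forest_props(4)[OF par0 fin] by blast
  obtain par where ef: "elim_forest V F par" and hb: "\<forall>v\<in>V. forest_depth V par v \<le> treedepth V F"
    using LeastI_ex[OF ex] unfolding treedepth_def by blast
  let ?R = "forest_anc V par"
  have suc: "successively (\<lambda>a b. (a, b) \<in> ?R \<or> (b, a) \<in> ?R) xs"
    unfolding successively_conv_nth
  proof (intro allI impI)
    fix i assume i: "Suc i < length xs"
    then have "(xs ! i, xs ! Suc i) \<in> A" using xs by (simp add: dpath_def)
    then have "{xs ! i, xs ! Suc i} \<in> F" unfolding F_def uedges_def by blast
    then obtain u v where uv: "{xs ! i, xs ! Suc i} = {u, v}" "(u, v) \<in> ?R" using efD(3)[OF ef] by blast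
    from uv(1) have "(xs ! i = u \<and> xs ! Suc i = v) \<or> (xs ! i = v \<and> xs ! Suc i = u)"
      by (simp add: doubleton_eq_iff)
    then show "(xs ! i, xs ! Suc i) \<in> ?R \<or> (xs ! Suc i, xs ! i) \<in> ?R" using uv(2) by blast
  qed
  have d1: "\<forall>x\<in>set xs. 1 \<le> forest_depth V par x" by (simp add: forest_depth_def)
  have dxs: "distinct xs" "set xs \<subseteq> V" using xs by (simp_all add: dpath_def)
  have "length xs + 1 \<le> 2 ^ (treedepth V F + 1 - 1)"
    by (rule count_path[OF forest_props(1)[OF ef fin] forest_props(2)[OF ef fin] forest_props(3)[OF ef fin] hb dxs suc d1])
  then have "length xs + 1 \<le> 2 ^ treedepth V F" by simp
  then have "int (length xs + 1) \<le> 2 ^ treedepth V F" by (metis of_nat_le_iff of_nat_numeral of_nat_power)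
  moreover have "length xs \<ge> 1" using xs by (simp add: dpath_def Suc_leI)
  ultimately show ?thesis unfolding F_def by simp
qed

theorem mainTheorem11:
  fixes V :: "'a set" and E :: "'a set set" and A :: "('a \<times> 'a) set"
  assumes "mixed_graph V E A" and "no_directed_cycle A" and "V \<noteq> {}"
  shows "maxrank V A + 1 \<le> nd_m V (tc_edges E A) (tc_arcs A)
    \<and> maxrank V A \<le> treewidth V (uedges (tc_edges E A) (tc_arcs A))
    \<and> int (maxrank V A) \<le> 2 ^ treedepth V (uedges E A) - 2
    \<and> maxrank V A \<le> 2 * vertex_cover_number V (uedges E A)"
proof -
  note mg = assms(1)
  have fin: "finite V" using mgD(1)[OF mg] .
  have ac: "acyclic A" using assms(2) by (simp add: no_directed_cycle_def)
  obtain xs where xs: "dpath V A xs" "maxrank V A = length xs - 1" using longest[OF fin assms(3)] by blast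
  have len: "length xs \<ge> 1" using xs(1) by (simp add: dpath_def Suc_leI)
  have c1: "maxrank V A + 1 \<le> nd_m V (tc_edges E A) (tc_arcs A)"
    using part1[OF fin ac xs(1), of "tc_edges E A"] xs(2) len by (simp add: tc_arcs_def)
  have c2: "maxrank V A \<le> treewidth V (uedges (tc_edges E A) (tc_arcs A))"
    using part2[OF mg ac xs(1)] xs(2) by (simp add: tc_arcs_def)
  have c3: "int (maxrank V A) \<le> 2 ^ treedepth V (uedges E A) - 2"
    using part3[OF mg xs(1)] xs(2) by simp
  have c4: "maxrank V A \<le> 2 * vertex_cover_number V (uedges E A)"
    using part4[OF mg assms(3)] .
  show ?thesis using c1 c2 c3 c4 by blast
qed

end
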